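(* Let $\mathcal{C}$ be a locally small, strongly amendable category (having the pullbacks and pushouts required for PBPO and PBPO$^{+}$ rules and steps) in which every morphism can be factored as an epimorphism followed by a monomorphism. Then for every PBPO rule $\rho$ there exists a set $T$ of PBPO$^{+}$ rules such that ${\Rightarrow^{\mathrm{PBPO}}_\rho} = \bigcup\{ {\Rightarrow^{\mathrm{PBPO}^{+}}_\tau} \mid \tau \in T\}$.
   Context: A PBPO rule consists of morphisms $l : K \to L$, $r : K \to R$, $t_L : L \to L'$, $t_K : K \to K'$, $t_R : R \to R'$, $l' : K' \to L'$, $r' : K' \to R'$ with $t_L \circ l = l' \circ t_K$ and $t_R \circ r = r' \circ t_K$. A PBPO step $G_L \Rightarrow_\rho^{m,\alpha} G_R$ consists of $m : L \to G_L$, $\alpha : G_L \to L'$ with $t_L = \alpha \circ m$; a pullback $G_L \xleftarrow{g_L} G_K \xrightarrow{u'} K'$ of $\alpha$ and $l'$; the unique $u : K \to G_K$ with $g_L \circ u = m \circ l$ and $u' \circ u = t_K$; a pushout $G_K \xrightarrow{g_R} G_R \xleftarrow{w} R$ of $u$ and $r$; and the unique $w' : G_R \to R'$ with $w' \circ g_R = r' \circ u'$ and $w' \circ w = t_R$. ${\Rightarrow^{\mathrm{PBPO}}_\rho}$ relates $G_L$ to $G_R$ if such a step exists for some $m,\alpha$. A PBPO$^{+}$ rule consists of $l : K \to L$, $r : K \to R$, monomorphisms $t_L : L \rightarrowtail L'$, $t_K : K \rightarrowtail K'$ and $l' : K' \to L'$ such that $(l,t_K)$ is a pullback of $(t_L,l')$.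 $G_L \Rightarrow^{\mathrm{PBPO}^{+}}_\tau G_R$ holds if there are $\alpha : G_L \to L'$ and $m : L \to G_L$ with $L \xleftarrow{1_L} L \xrightarrow{m} G_L$ a pullback of $t_L$ and $\alpha$; a pullback $G_L \xleftarrow{g_L} G_K \xrightarrow{u'} K'$ of $\alpha$ and $l'$; the unique $u : K \to G_K$ with $t_K = u' \circ u$; and a pushout $G_K \xrightarrow{g_R} G_R \xleftarrow{w} R$ of $u$ and $r$. A category is amendable if for every $t_L : L \to L'$ there is a factorization $t_L = \beta \circ t_L'$ with $t_L' : L \rightarrowtail L''$ mono such that for every factorization $t_L = \alpha \circ m$ with $m$ mono there exists $\alpha' : G_L \to L''$ with $\alpha' \circ m = t_L'$ and $\beta \circ \alpha' = \alpha$; it is strongly amendable if $(t_L',\beta)$ can be chosen so that moreover, in each case, $L \xleftarrow{1_L} L \xrightarrow{m} G_L$ is a pullback of $t_L'$ and $\alpha'$. *)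

theory Defs
  imports Main
begin

record ('o, 'a) cat =
  Obj  :: "'o set"
  Arr  :: "'a set"
  Dom  :: "'a \<Rightarrow> 'o"
  Cod  :: "'a \<Rightarrow> 'o"
  Idt  :: "'o \<Rightarrow> 'a"
  Cmp  :: "'a \<Rightarrow> 'a \<Rightarrow> 'a"   (* Cmp C g f = g \<circ> f, defined when Cod f = Dom g *)

definition hom :: "('o,'a) cat \<Rightarrow> 'a \<Rightarrow> 'o \<Rightarrow> 'o \<Rightarrow> bool" where
  "hom C f X Y \<longleftrightarrow> f \<in> Arr C \<and> Dom C f = X \<and> Cod C f = Y"

definition is_category :: "('o,'a) cat \<Rightarrow> bool" where
  "is_category C \<longleftrightarrow>
     (\<forall>f\<in>Arr C. Dom C f \<in> Obj C \<and> Cod C f \<in> Obj C) \<and>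
     (\<forall>X\<in>Obj C. hom C (Idt C X) X X) \<and>
     (\<forall>f g. f \<in> Arr C \<longrightarrow> g \<in> Arr C \<longrightarrow> Cod C f = Dom C g \<longrightarrow>
            hom C (Cmp C g f) (Dom C f) (Cod C g)) \<and>
     (\<forall>f\<in>Arr C. Cmp C f (Idt C (Dom C f)) = f \<and> Cmp C (Idt C (Cod C f)) f = f) \<and>
     (\<forall>f g h. f \<in> Arr C \<longrightarrow> g \<in> Arr C \<longrightarrow> h \<in> Arr C \<longrightarrow>
            Cod C f = Dom C g \<longrightarrow> Cod C g = Dom C h \<longrightarrow>
            Cmp C h (Cmp C g f) = Cmp C (Cmp C h g) f)"

definition mono :: "('o,'a) cat \<Rightarrow> 'a \<Rightarrow> bool" where
  "mono C m \<longleftrightarrow> m \<in> Arr C \<and>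
     (\<forall>f g. f \<in> Arr C \<longrightarrow> g \<in> Arr C \<longrightarrow> Cod C f = Dom C m \<longrightarrow> Cod C g = Dom C m \<longrightarrow>
            Dom C f = Dom C g \<longrightarrow> Cmp C m f = Cmp C m g \<longrightarrow> f = g)"

definition epi :: "('o,'a) cat \<Rightarrow> 'a \<Rightarrow> bool" where
  "epi C e \<longleftrightarrow> e \<in> Arr C \<and>
     (\<forall>f g. f \<in> Arr C \<longrightarrow> g \<in> Arr C \<longrightarrow> Dom C f = Cod C e \<longrightarrow> Dom C g = Cod C e \<longrightarrow>
            Cod C f = Cod C g \<longrightarrow> Cmp C f e = Cmp C g e \<longrightarrow> f = g)"

text \<open>The span  A <-p1- P -p2-> B  is a pullback of the cospan  A -f-> Z <-g- B.\<close>
definition is_pullback :: "('o,'a) cat \<Rightarrow> 'a \<Rightarrow> 'a \<Rightarrow> 'a \<Rightarrow> 'a \<Rightarrow> bool" where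
  "is_pullback C f g p1 p2 \<longleftrightarrow>
     f \<in> Arr C \<and> g \<in> Arr C \<and> Cod C f = Cod C g \<and>
     hom C p1 (Dom C p1) (Dom C f) \<and> hom C p2 (Dom C p1) (Dom C g) \<and>
     Cmp C f p1 = Cmp C g p2 \<and>
     (\<forall>q1 q2. hom C q1 (Dom C q1) (Dom C f) \<longrightarrow> hom C q2 (Dom C q1) (Dom C g) \<longrightarrow>
        Cmp C f q1 = Cmp C g q2 \<longrightarrow>
        (\<exists>!v. hom C v (Dom C q1) (Dom C p1) \<and> Cmp C p1 v = q1 \<and> Cmp C p2 v = q2))"

text \<open>The cospan  A -q1-> Q <-q2- B  is a pushout of the span  A <-f- X -g-> B.\<close>
definition is_pushout :: "('o,'a) cat \<Rightarrow> 'a \<Rightarrow> 'a \<Rightarrow> 'a \<Rightarrow> 'a \<Rightarrow> bool" where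
  "is_pushout C f g q1 q2 \<longleftrightarrow>
     f \<in> Arr C \<and> g \<in> Arr C \<and> Dom C f = Dom C g \<and>
     hom C q1 (Cod C f) (Cod C q1) \<and> hom C q2 (Cod C g) (Cod C q1) \<and>
     Cmp C q1 f = Cmp C q2 g \<and>
     (\<forall>s1 s2. hom C s1 (Cod C f) (Cod C s1) \<longrightarrow> hom C s2 (Cod C g) (Cod C s1) \<longrightarrow>
        Cmp C s1 f = Cmp C s2 g \<longrightarrow>
        (\<exists>!v. hom C v (Cod C q1) (Cod C s1) \<and> Cmp C v q1 = s1 \<and> Cmp C v q2 = s2))"

definition has_pullbacks :: "('o,'a) cat \<Rightarrow> bool" where
  "has_pullbacks C \<longleftrightarrow> (\<forall>f g. f \<in> Arr C \<longrightarrow> g \<in> Arr C \<longrightarrow> Cod C f = Cod C g \<longrightarrow>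
      (\<exists>p1 p2. is_pullback C f g p1 p2))"

definition has_pushouts :: "('o,'a) cat \<Rightarrow> bool" where
  "has_pushouts C \<longleftrightarrow> (\<forall>f g. f \<in> Arr C \<longrightarrow> g \<in> Arr C \<longrightarrow> Dom C f = Dom C g \<longrightarrow>
      (\<exists>q1 q2. is_pushout C f g q1 q2))"

definition epi_mono_factorizations :: "('o,'a) cat \<Rightarrow> bool" where
  "epi_mono_factorizations C \<longleftrightarrow> (\<forall>f\<in>Arr C. \<exists>e m. epi C e \<and> mono C m \<and>
      Cod C e = Dom C m \<and> f = Cmp C m e)"

definition amendable :: "('o,'a) cat \<Rightarrow> bool" where
  "amendable C \<longleftrightarrow> (\<forall>tL\<in>Arr C. \<exists>tL' \<beta>.
     mono C tL' \<and> Dom C tL' = Dom C tL \<and> hom C \<beta> (Cod C tL') (Cod C tL) \<and>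
     tL = Cmp C \<beta> tL' \<and>
     (\<forall>m \<alpha>. mono C m \<and> Dom C m = Dom C tL \<and> hom C \<alpha> (Cod C m) (Cod C tL) \<and>
            tL = Cmp C \<alpha> m \<longrightarrow>
        (\<exists>\<alpha>'. hom C \<alpha>' (Cod C m) (Cod C tL') \<and> Cmp C \<alpha>' m = tL' \<and> Cmp C \<beta> \<alpha>' = \<alpha>)))"

definition strongly_amendable :: "('o,'a) cat \<Rightarrow> bool" where
  "strongly_amendable C \<longleftrightarrow> (\<forall>tL\<in>Arr C. \<exists>tL' \<beta>.
     mono C tL' \<and> Dom C tL' = Dom C tL \<and> hom C \<beta> (Cod C tL') (Cod C tL) \<and>
     tL = Cmp C \<beta> tL' \<and>
     (\<forall>m \<alpha>. mono C m \<and> Dom C m = Dom C tL \<and> hom C \<alpha> (Cod C m) (Cod C tL) \<and>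
            tL = Cmp C \<alpha> m \<longrightarrow>
        (\<exists>\<alpha>'. hom C \<alpha>' (Cod C m) (Cod C tL') \<and> Cmp C \<alpha>' m = tL' \<and> Cmp C \<beta> \<alpha>' = \<alpha> \<and>
              is_pullback C tL' \<alpha>' (Idt C (Dom C tL)) m)))"

record 'a pbpo_rule =
  pl  :: 'a   (* l  : K  -> L  *)
  pr  :: 'a   (* r  : K  -> R  *)
  ptL :: 'a   (* tL : L  -> L' *)
  ptK :: 'a   (* tK : K  -> K' *)
  ptR :: 'a   (* tR : R  -> R' *)
  pl' :: 'a   (* l' : K' -> L' *)
  pr' :: 'a   (* r' : K' -> R' *)

definition is_pbpo_rule :: "('o,'a) cat \<Rightarrow> 'a pbpo_rule \<Rightarrow> bool" where
  "is_pbpo_rule C \<rho> \<longleftrightarrow>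
     (let l = pl \<rho>; r = pr \<rho>; tL = ptL \<rho>; tK = ptK \<rho>; tR = ptR \<rho>; l' = pl' \<rho>; r' = pr' \<rho>;
          K = Dom C l; L = Cod C l; R = Cod C r; L' = Cod C tL; K' = Cod C tK; R' = Cod C tR in
      hom C l K L \<and> hom C r K R \<and> hom C tL L L' \<and> hom C tK K K' \<and> hom C tR R R' \<and>
      hom C l' K' L' \<and> hom C r' K' R' \<and>
      Cmp C tL l = Cmp C l' tK \<and> Cmp C tR r = Cmp C r' tK)"

definition pbpo_step :: "('o,'a) cat \<Rightarrow> 'a pbpo_rule \<Rightarrow> 'o \<Rightarrow> 'o \<Rightarrow> bool" where
  "pbpo_step C \<rho> GL GR \<longleftrightarrow>
     (let l = pl \<rho>; r = pr \<rho>; tL = ptL \<rho>; tK = ptK \<rho>; tR = ptR \<rho>; l' = pl' \<rho>; r' = pr' \<rho>;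
          K = Dom C l; L = Cod C l; R = Cod C r; L' = Cod C tL; K' = Cod C tK; R' = Cod C tR in
      \<exists>m \<alpha> gL u' u gR w w'.
        hom C m L GL \<and> hom C \<alpha> GL L' \<and> tL = Cmp C \<alpha> m \<and>
        is_pullback C \<alpha> l' gL u' \<and>
        hom C u K (Dom C gL) \<and> Cmp C gL u = Cmp C m l \<and> Cmp C u' u = tK \<and>
        is_pushout C u r gR w \<and> Cod C gR = GR \<and>
        hom C w' GR R' \<and> Cmp C w' gR = Cmp C r' u' \<and> Cmp C w' w = tR)"

record 'a pbpop_rule =
  ql  :: 'a   (* l  : K  -> L  *)
  qr  :: 'a   (* r  : K  -> R  *)
  qtL :: 'a   (* tL : L  >-> L' (mono) *)
  qtK :: 'a   (* tK : K  >-> K' (mono) *)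
  ql' :: 'a   (* l' : K' -> L' *)

definition is_pbpop_rule :: "('o,'a) cat \<Rightarrow> 'a pbpop_rule \<Rightarrow> bool" where
  "is_pbpop_rule C \<tau> \<longleftrightarrow>
     (let l = ql \<tau>; r = qr \<tau>; tL = qtL \<tau>; tK = qtK \<tau>; l' = ql' \<tau>;
          K = Dom C l; L = Cod C l; R = Cod C r; L' = Cod C tL; K' = Cod C tK in
      hom C l K L \<and> hom C r K R \<and> hom C tL L L' \<and> hom C tK K K' \<and> hom C l' K' L' \<and>
      mono C tL \<and> mono C tK \<and> is_pullback C tL l' l tK)"

definition pbpop_step :: "('o,'a) cat \<Rightarrow> 'a pbpop_rule \<Rightarrow> 'o \<Rightarrow> 'o \<Rightarrow> bool" where
  "pbpop_step C \<tau> GL GR \<longleftrightarrow>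
     (let l = ql \<tau>; r = qr \<tau>; tL = qtL \<tau>; tK = qtK \<tau>; l' = ql' \<tau>;
          K = Dom C l; L = Cod C l; L' = Cod C tL in
      \<exists>\<alpha> m gL u' u gR w.
        hom C \<alpha> GL L' \<and> hom C m L GL \<and>
        is_pullback C tL \<alpha> (Idt C L) m \<and>
        is_pullback C \<alpha> l' gL u' \<and>
        hom C u K (Dom C gL) \<and> Cmp C u' u = tK \<and>
        (\<forall>v. hom C v K (Dom C gL) \<and> Cmp C u' v = tK \<longrightarrow> v = u) \<and>
        is_pushout C u r gR w \<and> Cod C gR = GR)"

end

theory Submission
  imports Defs
begin


lemma hom_comp:
  "is_category C \<Longrightarrow> hom C f X Y \<Longrightarrow> hom C g Y Z \<Longrightarrow> hom C (Cmp C g f) X Z"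
  by (auto simp: is_category_def hom_def)

lemma assoc:
  "is_category C \<Longrightarrow> hom C f X Y \<Longrightarrow> hom C g Y Z \<Longrightarrow> hom C h Z W \<Longrightarrow>
   Cmp C (Cmp C h g) f = Cmp C h (Cmp C g f)"
  by (auto simp: is_category_def hom_def)

lemma id_hom: "is_category C \<Longrightarrow> X \<in> Obj C \<Longrightarrow> hom C (Idt C X) X X"
  by (auto simp: is_category_def)

lemma id_l: "is_category C \<Longrightarrow> hom C f X Y \<Longrightarrow> Cmp C (Idt C Y) f = f"
  by (auto simp: is_category_def hom_def)

lemma id_r: "is_category C \<Longrightarrow> hom C f X Y \<Longrightarrow> Cmp C f (Idt C X) = f"
  by (auto simp: is_category_def hom_def)

lemma hom_arr: "hom C f X Y \<Longrightarrow> f \<in> Arr C" and hom_dom: "hom C f X Y \<Longrightarrow> Dom C f = X"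
  and hom_cod: "hom C f X Y \<Longrightarrow> Cod C f = Y"
  by (auto simp: hom_def)

lemma arr_hom: "f \<in> Arr C \<Longrightarrow> hom C f (Dom C f) (Cod C f)"
  by (auto simp: hom_def)

lemma pbD:
  assumes "is_pullback C f g p1 p2"
  shows "f \<in> Arr C" "g \<in> Arr C" "Cod C f = Cod C g" "hom C p1 (Dom C p1) (Dom C f)"
    "hom C p2 (Dom C p1) (Dom C g)" "Cmp C f p1 = Cmp C g p2"
  using assms by (auto simp: is_pullback_def)

lemma pb_ex:
  assumes "is_pullback C f g p1 p2" "hom C q1 X (Dom C f)" "hom C q2 X (Dom C g)"
    "Cmp C f q1 = Cmp C g q2"
  obtains v where "hom C v X (Dom C p1)" "Cmp C p1 v = q1" "Cmp C p2 v = q2"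
proof -
  have "Dom C q1 = X" using assms(2) by (simp add: hom_def)
  then show ?thesis using assms that unfolding is_pullback_def by metis
qed

lemma pb_uniq:
  assumes C: "is_category C" and P: "is_pullback C f g p1 p2"
    and v: "hom C v X (Dom C p1)" and v': "hom C v' X (Dom C p1)"
    and e1: "Cmp C p1 v = Cmp C p1 v'" and e2: "Cmp C p2 v = Cmp C p2 v'"
  shows "v = v'"
proof -
  have h1: "hom C (Cmp C p1 v) X (Dom C f)" using hom_comp[OF C v pbD(4)[OF P]] .
  have h2: "hom C (Cmp C p2 v) X (Dom C g)" using hom_comp[OF C v pbD(5)[OF P]] .
  have "Cmp C f (Cmp C p1 v) = Cmp C g (Cmp C p2 v)"
    using assoc[OF C v pbD(4)[OF P] arr_hom[OF pbD(1)[OF P]]]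
      assoc[OF C v pbD(5)[OF P] arr_hom[OF pbD(2)[OF P]]] pbD(6)[OF P]
    by (metis pbD(3)[OF P])
  moreover have "Dom C (Cmp C p1 v) = X" using h1 by (simp add: hom_def)
  ultimately have "\<exists>!z. hom C z X (Dom C p1) \<and> Cmp C p1 z = Cmp C p1 v \<and> Cmp C p2 z = Cmp C p2 v"
    using P h1 h2 unfolding is_pullback_def by metis
  then show ?thesis using v v' e1 e2 by metis
qed

lemma pbI:
  assumes "f \<in> Arr C" "g \<in> Arr C" "Cod C f = Cod C g" "hom C p1 P (Dom C f)"
    "hom C p2 P (Dom C g)" "Cmp C f p1 = Cmp C g p2"
    and ex: "\<And>q1 q2 X. hom C q1 X (Dom C f) \<Longrightarrow> hom C q2 X (Dom C g) \<Longrightarrow> Cmp C f q1 = Cmp C g q2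
       \<Longrightarrow> \<exists>v. hom C v X P \<and> Cmp C p1 v = q1 \<and> Cmp C p2 v = q2"
    and un: "\<And>v v' X. hom C v X P \<Longrightarrow> hom C v' X P \<Longrightarrow> Cmp C p1 v = Cmp C p1 v'
       \<Longrightarrow> Cmp C p2 v = Cmp C p2 v' \<Longrightarrow> v = v'"
  shows "is_pullback C f g p1 p2"
proof -
  have DP: "Dom C p1 = P" using assms(4) by (simp add: hom_def)
  show ?thesis unfolding is_pullback_def DP
  proof (intro conjI allI impI assms(1-6))
    fix q1 q2 assume a: "hom C q1 (Dom C q1) (Dom C f)" "hom C q2 (Dom C q1) (Dom C g)"
      "Cmp C f q1 = Cmp C g q2"
    obtain v where v: "hom C v (Dom C q1) P" "Cmp C p1 v = q1" "Cmp C p2 v = q2"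
      using ex[OF a] by blast
    show "\<exists>!v. hom C v (Dom C q1) P \<and> Cmp C p1 v = q1 \<and> Cmp C p2 v = q2"
      using v un by metis
  qed
qed

lemma pb_paste:
  assumes C: "is_category C" and R: "is_pullback C g h q1 q2" and Lp: "is_pullback C f q1 p1 p2"
    and f: "hom C f A (Dom C g)"
  shows "is_pullback C (Cmp C g f) h p1 (Cmp C q2 p2)"
proof -
  note R1 = pbD[OF R] and L1 = pbD[OF Lp]
  have fA: "Dom C f = A" "Cod C f = Dom C g" using f by (auto simp: hom_def)
  have q1c: "Cod C q1 = Dom C g" using L1(3) fA by simp
  have p1h: "hom C p1 (Dom C p1) A" using L1(4) fA by simp
  have p2h: "hom C p2 (Dom C p1) (Dom C q1)" using L1(5) .
  have q1h: "hom C q1 (Dom C q1) (Dom C g)" using R1(4) .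
  have q2h: "hom C q2 (Dom C q1) (Dom C h)" using R1(5) .
  have gh: "hom C g (Dom C g) (Cod C g)" using arr_hom[OF R1(1)] .
  have hh: "hom C h (Dom C h) (Cod C g)" using arr_hom[OF R1(2)] R1(3) by simp
  have gf: "hom C (Cmp C g f) A (Cod C g)" using hom_comp[OF C f gh] .
  show ?thesis
  proof (rule pbI)
    show "Cmp C g f \<in> Arr C" using gf by (simp add: hom_def)
    show "h \<in> Arr C" by (rule R1(2))
    show "Cod C (Cmp C g f) = Cod C h" using gf hh by (simp add: hom_def)
    show "hom C p1 (Dom C p1) (Dom C (Cmp C g f))" using p1h gf by (simp add: hom_def)
    show "hom C (Cmp C q2 p2) (Dom C p1) (Dom C h)" using hom_comp[OF C p2h q2h] .
    show "Cmp C (Cmp C g f) p1 = Cmp C h (Cmp C q2 p2)"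
      by (metis assoc[OF C p1h f gh] assoc[OF C p2h q1h gh] assoc[OF C p2h q2h hh] L1(6) R1(6))
  next
    fix a b X assume a: "hom C a X (Dom C (Cmp C g f))" "hom C b X (Dom C h)"
      "Cmp C (Cmp C g f) a = Cmp C h b"
    have ah: "hom C a X A" using a(1) gf by (simp add: hom_def)
    have fa: "hom C (Cmp C f a) X (Dom C g)" using hom_comp[OF C ah f] .
    have "Cmp C g (Cmp C f a) = Cmp C h b" using a(3) assoc[OF C ah f gh] by simp
    then obtain w where w: "hom C w X (Dom C q1)" "Cmp C q1 w = Cmp C f a" "Cmp C q2 w = b"
      using pb_ex[OF R fa a(2)] by blast
    have fa2: "hom C a X (Dom C f)" using ah fA by simp
    obtain v where v: "hom C v X (Dom C p1)" "Cmp C p1 v = a" "Cmp C p2 v = w"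
      using pb_ex[OF Lp fa2 w(1)] w(2) by metis
    have "Cmp C (Cmp C q2 p2) v = b" using assoc[OF C v(1) p2h q2h] v(3) w(3) by simp
    then show "\<exists>v. hom C v X (Dom C p1) \<and> Cmp C p1 v = a \<and> Cmp C (Cmp C q2 p2) v = b"
      using v by blast
  next
    fix v v' X assume a: "hom C v X (Dom C p1)" "hom C v' X (Dom C p1)" "Cmp C p1 v = Cmp C p1 v'"
      "Cmp C (Cmp C q2 p2) v = Cmp C (Cmp C q2 p2) v'"
    have w: "hom C (Cmp C p2 v) X (Dom C q1)" "hom C (Cmp C p2 v') X (Dom C q1)"
      using hom_comp[OF C a(1) p2h] hom_comp[OF C a(2) p2h] by auto
    have e1: "Cmp C q1 (Cmp C p2 v) = Cmp C q1 (Cmp C p2 v')"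
      by (metis assoc[OF C a(1) p2h q1h] assoc[OF C a(2) p2h q1h] assoc[OF C a(1) p1h f]
          assoc[OF C a(2) p1h f] L1(6) a(3))
    have e2: "Cmp C q2 (Cmp C p2 v) = Cmp C q2 (Cmp C p2 v')"
      using assoc[OF C a(1) p2h q2h] assoc[OF C a(2) p2h q2h] a(4) by simp
    have "Cmp C p2 v = Cmp C p2 v'" using pb_uniq[OF C R w e1 e2] .
    then show "v = v'" using pb_uniq[OF C Lp a(1,2) a(3)] by blast
  qed
qed

lemma pb_cancel:
  assumes C: "is_category C" and R: "is_pullback C g h q1 q2"
    and O: "is_pullback C (Cmp C g f) h p1 p2'" and f: "hom C f A (Dom C g)"
    and v: "hom C v (Dom C p1) (Dom C q1)" "Cmp C q1 v = Cmp C f p1" "Cmp C q2 v = p2'"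
  shows "is_pullback C f q1 p1 v"
proof -
  note R1 = pbD[OF R] and O1 = pbD[OF O]
  have fA: "Dom C f = A" "Cod C f = Dom C g" using f by (auto simp: hom_def)
  have q1h: "hom C q1 (Dom C q1) (Dom C g)" using R1(4) .
  have q2h: "hom C q2 (Dom C q1) (Dom C h)" using R1(5) .
  have gh: "hom C g (Dom C g) (Cod C g)" using arr_hom[OF R1(1)] .
  have hh: "hom C h (Dom C h) (Cod C g)" using arr_hom[OF R1(2)] R1(3) by simp
  have gf: "hom C (Cmp C g f) A (Cod C g)" using hom_comp[OF C f gh] .
  have p1h: "hom C p1 (Dom C p1) A" using O1(4) gf by (simp add: hom_def)
  have p2h: "hom C p2' (Dom C p1) (Dom C h)" using O1(5) .
  show ?thesis
  proof (rule pbI)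
    show "f \<in> Arr C" using f by (simp add: hom_def)
    show "q1 \<in> Arr C" using q1h by (simp add: hom_def)
    show "Cod C f = Cod C q1" using fA q1h by (simp add: hom_def)
    show "hom C p1 (Dom C p1) (Dom C f)" using p1h fA by simp
    show "hom C v (Dom C p1) (Dom C q1)" by (rule v(1))
    show "Cmp C f p1 = Cmp C q1 v" using v(2) by simp
  next
    fix a b X assume a: "hom C a X (Dom C f)" "hom C b X (Dom C q1)" "Cmp C f a = Cmp C q1 b"
    have ah: "hom C a X A" using a(1) fA by simp
    have qb: "hom C (Cmp C q2 b) X (Dom C h)" using hom_comp[OF C a(2) q2h] .
    have ah2: "hom C a X (Dom C (Cmp C g f))" using ah gf by (simp add: hom_def)
    have "Cmp C (Cmp C g f) a = Cmp C h (Cmp C q2 b)"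
      by (metis assoc[OF C ah f gh] assoc[OF C a(2) q1h gh] assoc[OF C a(2) q2h hh] R1(6) a(3))
    then obtain z where z: "hom C z X (Dom C p1)" "Cmp C p1 z = a" "Cmp C p2' z = Cmp C q2 b"
      using pb_ex[OF O ah2 qb] by blast
    have vz: "hom C (Cmp C v z) X (Dom C q1)" using hom_comp[OF C z(1) v(1)] .
    have "Cmp C v z = b"
    proof (rule pb_uniq[OF C R vz a(2)])
      show "Cmp C q1 (Cmp C v z) = Cmp C q1 b"
        by (metis assoc[OF C z(1) v(1) q1h] v(2) assoc[OF C z(1) p1h f] z(2) a(3))
      show "Cmp C q2 (Cmp C v z) = Cmp C q2 b"
        by (metis assoc[OF C z(1) v(1) q2h] v(3) z(3))
    qed
    then show "\<exists>z. hom C z X (Dom C p1) \<and> Cmp C p1 z = a \<and> Cmp C v z = b" using z by blast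
  next
    fix z z' X assume a: "hom C z X (Dom C p1)" "hom C z' X (Dom C p1)" "Cmp C p1 z = Cmp C p1 z'"
      "Cmp C v z = Cmp C v z'"
    have "Cmp C p2' z = Cmp C p2' z'"
      by (metis assoc[OF C a(1) v(1) q2h] assoc[OF C a(2) v(1) q2h] v(3) a(4))
    then show "z = z'" using pb_uniq[OF C O a(1,2) a(3)] by blast
  qed
qed

lemma pb_mono:
  assumes C: "is_category C" and P: "is_pullback C f g p1 p2" and m: "mono C f"
  shows "mono C p2"
proof -
  note P1 = pbD[OF P]
  have fh: "hom C f (Dom C f) (Cod C f)" using arr_hom[OF P1(1)] .
  have gh: "hom C g (Dom C g) (Cod C f)" using arr_hom[OF P1(2)] P1(3) by simp
  show ?thesis unfolding mono_def
  proof (intro conjI allI impI)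
    show "p2 \<in> Arr C" using P1(5) by (simp add: hom_def)
    fix a b assume a: "a \<in> Arr C" "b \<in> Arr C" "Cod C a = Dom C p2" "Cod C b = Dom C p2"
      "Dom C a = Dom C b" "Cmp C p2 a = Cmp C p2 b"
    have ah: "hom C a (Dom C a) (Dom C p1)" and bh: "hom C b (Dom C a) (Dom C p1)"
      using a P1(5) by (auto simp: hom_def)
    have pa: "hom C (Cmp C p1 a) (Dom C a) (Dom C f)" "hom C (Cmp C p1 b) (Dom C a) (Dom C f)"
      using hom_comp[OF C ah P1(4)] hom_comp[OF C bh P1(4)] by auto
    have "Cmp C f (Cmp C p1 a) = Cmp C f (Cmp C p1 b)"
      by (metis assoc[OF C ah P1(4) fh] assoc[OF C bh P1(4) fh] assoc[OF C ah P1(5) gh]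
          assoc[OF C bh P1(5) gh] P1(6) a(6))
    then have "Cmp C p1 a = Cmp C p1 b" using m pa unfolding mono_def hom_def by metis
    then show "a = b" using pb_uniq[OF C P ah bh] a(6) by blast
  qed
qed

definition opc :: "('o,'a) cat \<Rightarrow> ('o,'a) cat" where
  "opc C = \<lparr>Obj = Obj C, Arr = Arr C, Dom = Cod C, Cod = Dom C, Idt = Idt C,
             Cmp = (\<lambda>g f. Cmp C f g)\<rparr>"

lemma opc_simps[simp]: "Obj (opc C) = Obj C" "Arr (opc C) = Arr C" "Dom (opc C) = Cod C"
  "Cod (opc C) = Dom C" "Idt (opc C) = Idt C" "Cmp (opc C) g f = Cmp C f g"
  by (simp_all add: opc_def)

lemma hom_opc[simp]: "hom (opc C) f X Y = hom C f Y X"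
  by (auto simp: hom_def)

lemma opc_cat: "is_category C \<Longrightarrow> is_category (opc C)"
  unfolding is_category_def by (auto simp: hom_def)

lemma po_pb: "is_pushout C f g q1 q2 = is_pullback (opc C) f g q1 q2"
  unfolding is_pushout_def is_pullback_def by simp

lemma po_paste:
  assumes C: "is_category C" and R: "is_pushout C g h q1 q2" and Lp: "is_pushout C f q1 p1 p2"
    and f: "hom C f (Cod C g) A"
  shows "is_pushout C (Cmp C f g) h p1 (Cmp C p2 q2)"
  using pb_paste[OF opc_cat[OF C], of g h q1 q2 f p1 p2 A] assms by (simp add: po_pb)

lemma po_cancel:
  assumes C: "is_category C" and R: "is_pushout C g h q1 q2"
    and O: "is_pushout C (Cmp C f g) h p1 p2'" and f: "hom C f (Cod C g) A"
    and v: "hom C v (Cod C q1) (Cod C p1)" "Cmp C v q1 = Cmp C p1 f" "Cmp C v q2 = p2'"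
  shows "is_pushout C f q1 p1 v"
  using pb_cancel[OF opc_cat[OF C], of g h q1 q2 f p1 p2' A v] assms by (simp add: po_pb)

lemma po_ex:
  assumes "is_pushout C f g q1 q2" "hom C s1 (Cod C f) X" "hom C s2 (Cod C g) X"
    "Cmp C s1 f = Cmp C s2 g"
  obtains v where "hom C v (Cod C q1) X" "Cmp C v q1 = s1" "Cmp C v q2 = s2"
  using pb_ex[of "opc C" f g q1 q2 s1 X s2] assms by (auto simp: po_pb)

lemma poD:
  assumes "is_pushout C f g q1 q2"
  shows "f \<in> Arr C" "g \<in> Arr C" "Dom C f = Dom C g" "hom C q1 (Cod C f) (Cod C q1)"
    "hom C q2 (Cod C g) (Cod C q1)" "Cmp C q1 f = Cmp C q2 g"
  using assms by (auto simp: is_pushout_def)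



lemma dom_obj: "is_category C \<Longrightarrow> f \<in> Arr C \<Longrightarrow> Dom C f \<in> Obj C"
  and cod_obj: "is_category C \<Longrightarrow> f \<in> Arr C \<Longrightarrow> Cod C f \<in> Obj C"
  by (auto simp: is_category_def)

lemma gl_u:
  assumes C: "is_category C" and A: "is_pullback C t' a' (Idt C (Dom C t')) m'"
    and B: "is_pullback C a' p1 gL u2" and Q: "is_pullback C t' p1 lt tKt"
    and v: "hom C v (Dom C lt) (Dom C gL)" and e: "Cmp C u2 v = tKt"
  shows "Cmp C gL v = Cmp C m' lt"
proof -
  note A1 = pbD[OF A] and B1 = pbD[OF B] and Q1 = pbD[OF Q]
  have Le: "Dom C t' \<in> Obj C" using dom_obj[OF C A1(1)] .
  have idh: "hom C (Idt C (Dom C t')) (Dom C t') (Dom C t')" using id_hom[OF C Le] .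
  have a'h: "hom C a' (Dom C a') (Cod C t')" using arr_hom[OF A1(2)] A1(3) by simp
  have p1h: "hom C p1 (Dom C p1) (Cod C t')" using arr_hom[OF Q1(2)] Q1(3) by simp
  have t'h: "hom C t' (Dom C t') (Cod C t')" using arr_hom[OF A1(1)] .
  have gLv: "hom C (Cmp C gL v) (Dom C lt) (Dom C a')" using hom_comp[OF C v B1(4)] .
  have "Cmp C a' (Cmp C gL v) = Cmp C t' lt"
    by (metis assoc[OF C v B1(4) a'h] assoc[OF C v B1(5) p1h] B1(6) e Q1(6))
  then obtain z where z: "hom C z (Dom C lt) (Dom C (Idt C (Dom C t')))"
      "Cmp C (Idt C (Dom C t')) z = lt" "Cmp C m' z = Cmp C gL v"
    using pb_ex[OF A Q1(4) gLv] by metis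
  have "z = lt" using z(1,2) id_l[OF C] idh by (metis hom_def)
  then show ?thesis using z(3) by simp
qed

definition cand :: "('o,'a) cat \<Rightarrow> 'a \<Rightarrow> 'a \<Rightarrow> 'a \<Rightarrow> 'a \<Rightarrow> 'a \<Rightarrow> 'a \<Rightarrow> 'a \<Rightarrow> 'a \<Rightarrow> 'a
   \<Rightarrow> 'a \<Rightarrow> 'a \<Rightarrow> 'a \<Rightarrow> 'a \<Rightarrow> 'a \<Rightarrow> 'a \<Rightarrow> 'a \<Rightarrow> bool" where
"cand C l r tL tK l' e t t' \<beta> p1 p2 lt tKt k rt kR \<longleftrightarrow>
  hom C e (Cod C l) (Cod C e) \<and> hom C t (Cod C e) (Cod C tL) \<and> Cmp C t e = tL \<and>
  mono C t' \<and> Dom C t' = Dom C t \<and> hom C \<beta> (Cod C t') (Cod C t) \<and> t = Cmp C \<beta> t' \<and>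
  (\<forall>m \<alpha>. mono C m \<and> Dom C m = Dom C t \<and> hom C \<alpha> (Cod C m) (Cod C t) \<and> t = Cmp C \<alpha> m \<longrightarrow>
        (\<exists>\<alpha>'. hom C \<alpha>' (Cod C m) (Cod C t') \<and> Cmp C \<alpha>' m = t' \<and> Cmp C \<beta> \<alpha>' = \<alpha> \<and>
              is_pullback C t' \<alpha>' (Idt C (Dom C t)) m)) \<and>
  is_pullback C \<beta> l' p1 p2 \<and> is_pullback C t' p1 lt tKt \<and>
  hom C k (Dom C l) (Dom C lt) \<and> Cmp C lt k = Cmp C e l \<and> Cmp C p2 (Cmp C tKt k) = tK \<and>
  is_pushout C k r rt kR"

lemma tau_rho:
  assumes C: "is_category C"
    and rl: "hom C l K L" "hom C r K R" "hom C tL L L'" "hom C tK K K'" "hom C tR R R'"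
      "hom C l' K' L'" "hom C r' K' R'" "Cmp C tL l = Cmp C l' tK" "Cmp C tR r = Cmp C r' tK"
    and cd: "cand C l r tL tK l' e t t' \<beta> p1 p2 lt tKt k rt kR"
    and st: "hom C at GL (Cod C t')" "hom C mt (Cod C lt) GL"
      "is_pullback C t' at (Idt C (Cod C lt)) mt" "is_pullback C at p1 gL ut'"
      "hom C ut (Dom C lt) (Dom C gL)" "Cmp C ut' ut = tKt" "is_pushout C ut rt gR wt"
      "Cod C gR = GR"
  shows "\<exists>m \<alpha> gL u' u gR w w'. hom C m L GL \<and> hom C \<alpha> GL L' \<and> tL = Cmp C \<alpha> m \<and>
     is_pullback C \<alpha> l' gL u' \<and> hom C u K (Dom C gL) \<and> Cmp C gL u = Cmp C m l \<and>
     Cmp C u' u = tK \<and> is_pushout C u r gR w \<and> Cod C gR = GR \<and>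
     hom C w' GR R' \<and> Cmp C w' gR = Cmp C r' u' \<and> Cmp C w' w = tR"
proof -
  from cd have eh: "hom C e L (Cod C e)" and th: "hom C t (Cod C e) L'" and te: "Cmp C t e = tL"
    and t'm: "mono C t'" and dt': "Dom C t' = Dom C t" and \<beta>h: "hom C \<beta> (Cod C t') (Cod C t)"
    and tb: "t = Cmp C \<beta> t'" and PB1: "is_pullback C \<beta> l' p1 p2"
    and PB2: "is_pullback C t' p1 lt tKt" and kh: "hom C k (Dom C l) (Dom C lt)"
    and lk: "Cmp C lt k = Cmp C e l" and pk: "Cmp C p2 (Cmp C tKt k) = tK"
    and PO1: "is_pushout C k r rt kR"
    unfolding cand_def using rl by (auto simp: hom_def)
  note P1 = pbD[OF PB1] and P2 = pbD[OF PB2] and S3 = pbD[OF st(3)] and S4 = pbD[OF st(4)]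
  define Le where "Le = Cod C e"
  define L2 where "L2 = Cod C t'"
  define GK where "GK = Dom C gL"
  define Kt where "Kt = Dom C lt"
  have dtLe: "Dom C t = Le" using th by (simp add: hom_def Le_def)
  have ctL: "Cod C t = L'" using th by (simp add: hom_def)
  have t'h: "hom C t' Le L2" using P2(1) dt' dtLe by (simp add: hom_def L2_def)
  have \<beta>h2: "hom C \<beta> L2 L'" using \<beta>h ctL by (simp add: L2_def)
  have Kh: "Dom C l = K" using rl(1) by (simp add: hom_def)
  have lth: "hom C lt Kt Le" using P2(4) t'h by (simp add: hom_def Kt_def)
  have cl: "Cod C lt = Le" using lth by (simp add: hom_def)
  have p1h: "hom C p1 (Dom C p1) L2" using P1(4) \<beta>h2 by (simp add: hom_def)
  have p2h: "hom C p2 (Dom C p1) K'" using P1(5) rl(6) by (simp add: hom_def)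
  have tKth: "hom C tKt Kt (Dom C p1)" using P2(5) by (simp add: Kt_def)
  have kh2: "hom C k K Kt" using kh Kh by (simp add: Kt_def)
  have eh2: "hom C e L Le" using eh by (simp add: Le_def)
  have mth: "hom C mt Le GL" using st(2) cl by simp
  have ath: "hom C at GL L2" using st(1) by (simp add: L2_def)
  have gLh: "hom C gL GK GL" using S4(4) ath by (simp add: hom_def GK_def)
  have ut'h: "hom C ut' GK (Dom C p1)" using S4(5) by (simp add: GK_def)
  have uth: "hom C ut Kt GK" using st(5) by (simp add: Kt_def GK_def)
  have Leo: "Le \<in> Obj C" using cod_obj[OF C] eh2 by (auto simp: hom_def)
  have idh: "hom C (Idt C Le) Le Le" using id_hom[OF C Leo] .
  have atmt: "Cmp C at mt = t'"
    using S3(6) id_r[OF C t'h] cl by simp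
  define m where "m = Cmp C mt e"
  define \<alpha> where "\<alpha> = Cmp C \<beta> at"
  have mh: "hom C m L GL" unfolding m_def using hom_comp[OF C eh2 mth] .
  have \<alpha>h: "hom C \<alpha> GL L'" unfolding \<alpha>_def using hom_comp[OF C ath \<beta>h2] .
  have tLa: "tL = Cmp C \<alpha> m"
  proof -
    have "Cmp C \<alpha> m = Cmp C \<beta> (Cmp C at (Cmp C mt e))"
      unfolding \<alpha>_def m_def using assoc[OF C hom_comp[OF C eh2 mth] ath \<beta>h2] by simp
    also have "\<dots> = Cmp C \<beta> (Cmp C t' e)" using assoc[OF C eh2 mth ath] atmt by simp
    also have "\<dots> = Cmp C t e" using assoc[OF C eh2 t'h \<beta>h2] tb by simp
    finally show ?thesis using te by simp
  qed
  have at2: "hom C at GL (Dom C \<beta>)" using ath \<beta>h2 by (simp add: hom_def)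
  have PBo: "is_pullback C \<alpha> l' gL (Cmp C p2 ut')"
    unfolding \<alpha>_def using pb_paste[OF C PB1 st(4) at2] .
  define u where "u = Cmp C ut k"
  have uh: "hom C u K GK" unfolding u_def using hom_comp[OF C kh2 uth] .
  have glut: "Cmp C gL ut = Cmp C mt lt"
  proof -
    have A: "is_pullback C t' at (Idt C (Dom C t')) mt" using st(3) cl t'h by (simp add: hom_def)
    show ?thesis using gl_u[OF C A st(4) PB2 st(5) st(6)] .
  qed
  have glu: "Cmp C gL u = Cmp C m l"
  proof -
    have "Cmp C gL u = Cmp C (Cmp C gL ut) k" unfolding u_def using assoc[OF C kh2 uth gLh] by simp
    also have "\<dots> = Cmp C mt (Cmp C lt k)" using glut assoc[OF C kh2 lth mth] by simp
    also have "\<dots> = Cmp C m l" unfolding m_def using lk assoc[OF C rl(1) eh2 mth] by simp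
    finally show ?thesis .
  qed
  have u'u: "Cmp C (Cmp C p2 ut') u = tK"
  proof -
    have "Cmp C (Cmp C p2 ut') u = Cmp C p2 (Cmp C ut' (Cmp C ut k))"
      unfolding u_def using assoc[OF C hom_comp[OF C kh2 uth] ut'h p2h] by simp
    also have "\<dots> = Cmp C p2 (Cmp C tKt k)" using assoc[OF C kh2 uth ut'h] st(6) by simp
    finally show ?thesis using pk by simp
  qed
  have uth2: "hom C ut (Cod C k) GK" using uth kh2 by (simp add: hom_def)
  have POo: "is_pushout C u r gR (Cmp C wt kR)"
    unfolding u_def using po_paste[OF C PO1 st(7) uth2] .
  note PO = poD[OF POo]
  have s1: "hom C (Cmp C r' (Cmp C p2 ut')) (Cod C u) R'"
    using hom_comp[OF C hom_comp[OF C ut'h p2h] rl(7)] uh by (simp add: hom_def)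
  have s2: "hom C tR (Cod C r) R'" using rl(5) rl(2) by (simp add: hom_def)
  have "Cmp C (Cmp C r' (Cmp C p2 ut')) u = Cmp C tR r"
    using assoc[OF C uh hom_comp[OF C ut'h p2h] rl(7)] u'u rl(9) by simp
  then obtain w' where w': "hom C w' (Cod C gR) R'" "Cmp C w' gR = Cmp C r' (Cmp C p2 ut')"
      "Cmp C w' (Cmp C wt kR) = tR"
    using po_ex[OF POo s1 s2] by metis
  show ?thesis
    apply (rule exI[of _ m], rule exI[of _ \<alpha>], rule exI[of _ gL], rule exI[of _ "Cmp C p2 ut'"],
        rule exI[of _ u], rule exI[of _ gR], rule exI[of _ "Cmp C wt kR"], rule exI[of _ w'])
    using mh \<alpha>h tLa PBo uh glu u'u POo st(8) w' by (simp add: GK_def)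
qed



lemma get_pb:
  assumes "has_pullbacks C" "hom C f A Z" "hom C g B Z"
  obtains p1 p2 where "is_pullback C f g p1 p2"
proof -
  have "f \<in> Arr C" "g \<in> Arr C" "Cod C f = Cod C g" using assms(2,3) by (auto simp: hom_def)
  then have "\<exists>p1 p2. is_pullback C f g p1 p2" using assms(1) unfolding has_pullbacks_def by blast
  then show ?thesis using that by blast
qed

lemma get_po:
  assumes "has_pushouts C" "hom C f Z A" "hom C g Z B"
  obtains q1 q2 where "is_pushout C f g q1 q2"
proof -
  have "f \<in> Arr C" "g \<in> Arr C" "Dom C f = Dom C g" using assms(2,3) by (auto simp: hom_def)
  then have "\<exists>q1 q2. is_pushout C f g q1 q2" using assms(1) unfolding has_pushouts_def by blast
  then show ?thesis using that by blast
qed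

lemma rho_tau:
  assumes C: "is_category C" and hp: "has_pullbacks C" and hq: "has_pushouts C"
    and sa: "strongly_amendable C" and em: "epi_mono_factorizations C"
    and rl: "hom C l K L" "hom C r K R" "hom C tL L L'" "hom C tK K K'" "hom C tR R R'"
      "hom C l' K' L'" "hom C r' K' R'" "Cmp C tL l = Cmp C l' tK" "Cmp C tR r = Cmp C r' tK"
    and st: "hom C m L GL" "hom C \<alpha> GL L'" "tL = Cmp C \<alpha> m" "is_pullback C \<alpha> l' gL u'"
      "hom C u K (Dom C gL)" "Cmp C gL u = Cmp C m l" "Cmp C u' u = tK"
      "is_pushout C u r gR w" "Cod C gR = GR"
  shows "\<exists>e t t' \<beta> p1 p2 lt tKt k rt kR. cand C l r tL tK l' e t t' \<beta> p1 p2 lt tKt k rt kR \<and>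
     (\<exists>at mt gL ut' ut gR wt. hom C at GL (Cod C t') \<and> hom C mt (Cod C lt) GL \<and>
        is_pullback C t' at (Idt C (Cod C lt)) mt \<and> is_pullback C at p1 gL ut' \<and>
        hom C ut (Dom C lt) (Dom C gL) \<and> Cmp C ut' ut = tKt \<and>
        (\<forall>v. hom C v (Dom C lt) (Dom C gL) \<and> Cmp C ut' v = tKt \<longrightarrow> v = ut) \<and>
        is_pushout C ut rt gR wt \<and> Cod C gR = GR)"
proof -
  note S4 = pbD[OF st(4)]
  define GK where "GK = Dom C gL"
  have gLh: "hom C gL GK GL" using S4(4) st(2) by (simp add: hom_def GK_def)
  have u'h: "hom C u' GK K'" using S4(5) rl(6) by (simp add: hom_def GK_def)
  have uh: "hom C u K GK" using st(5) by (simp add: GK_def)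
  obtain e m' where em1: "epi C e" "mono C m'" "Cod C e = Dom C m'" "m = Cmp C m' e"
    using em st(1) unfolding epi_mono_factorizations_def hom_def by blast
  define Le where "Le = Cod C e"
  have eh0: "hom C e (Dom C e) Le" using em1(1) by (simp add: epi_def hom_def Le_def)
  have m'h0: "hom C m' Le (Cod C m')" using em1(2,3) by (simp add: mono_def hom_def Le_def)
  have "hom C m (Dom C e) (Cod C m')" using hom_comp[OF C eh0 m'h0] em1(4) by simp
  then have de: "Dom C e = L" and cm': "Cod C m' = GL" using st(1) by (auto simp: hom_def)
  have eh: "hom C e L Le" using eh0 de by simp
  have m'h: "hom C m' Le GL" using m'h0 cm' by simp
  define t where "t = Cmp C \<alpha> m'"
  have th: "hom C t Le L'" unfolding t_def using hom_comp[OF C m'h st(2)] .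
  have te: "Cmp C t e = tL" unfolding t_def using assoc[OF C eh m'h st(2)] em1(4) st(3) by simp
  obtain t' \<beta> where sa1: "mono C t'" "Dom C t' = Dom C t" "hom C \<beta> (Cod C t') (Cod C t)"
    "t = Cmp C \<beta> t'"
    and sa2: "\<forall>m \<alpha>. mono C m \<and> Dom C m = Dom C t \<and> hom C \<alpha> (Cod C m) (Cod C t) \<and> t = Cmp C \<alpha> m \<longrightarrow>
        (\<exists>\<alpha>'. hom C \<alpha>' (Cod C m) (Cod C t') \<and> Cmp C \<alpha>' m = t' \<and> Cmp C \<beta> \<alpha>' = \<alpha> \<and>
              is_pullback C t' \<alpha>' (Idt C (Dom C t)) m)"
    using sa[unfolded strongly_amendable_def, rule_format, OF hom_arr[OF th]] by blast
  define L2 where "L2 = Cod C t'"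
  have dt: "Dom C t = Le" "Cod C t = L'" using th by (auto simp: hom_def)
  have t'h: "hom C t' Le L2" using sa1 dt by (simp add: mono_def hom_def L2_def)
  have \<beta>h: "hom C \<beta> L2 L'" using sa1(3) dt by (simp add: L2_def)
  obtain p1 p2 where PB1: "is_pullback C \<beta> l' p1 p2"
    using get_pb[OF hp \<beta>h rl(6)] by blast
  note P1 = pbD[OF PB1]
  define K2 where "K2 = Dom C p1"
  have p1h: "hom C p1 K2 L2" using P1(4) \<beta>h by (simp add: hom_def K2_def)
  have p2h: "hom C p2 K2 K'" using P1(5) rl(6) by (simp add: hom_def K2_def)
  obtain lt tKt where PB2: "is_pullback C t' p1 lt tKt"
    using get_pb[OF hp t'h p1h] by blast
  note P2 = pbD[OF PB2]
  define Kt where "Kt = Dom C lt"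
  have lth: "hom C lt Kt Le" using P2(4) t'h by (simp add: hom_def Kt_def)
  have tKth: "hom C tKt Kt K2" using P2(5) p1h by (simp add: hom_def Kt_def)
  have el: "hom C (Cmp C e l) K Le" using hom_comp[OF C rl(1) eh] .
  have tel: "hom C (Cmp C t' (Cmp C e l)) K (Dom C \<beta>)" using hom_comp[OF C el t'h] \<beta>h
    by (simp add: hom_def)
  have tK2: "hom C tK K (Dom C l')" using rl(4,6) by (simp add: hom_def)
  have "Cmp C \<beta> (Cmp C t' (Cmp C e l)) = Cmp C l' tK"
    using assoc[OF C el t'h \<beta>h] sa1(4) assoc[OF C rl(1) eh th] te rl(8) by simp
  then obtain kK where kK: "hom C kK K (Dom C p1)" "Cmp C p1 kK = Cmp C t' (Cmp C e l)"
      "Cmp C p2 kK = tK"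
    using pb_ex[OF PB1 tel tK2] by metis
  have el2: "hom C (Cmp C e l) K (Dom C t')" using el t'h by (simp add: hom_def)
  have kK2: "hom C kK K (Dom C p1)" using kK(1) .
  obtain k where k: "hom C k K (Dom C lt)" "Cmp C lt k = Cmp C e l" "Cmp C tKt k = kK"
    using pb_ex[OF PB2 el2 kK2] kK(2) by metis
  have kh: "hom C k K Kt" using k(1) by (simp add: Kt_def)
  obtain rt kR where PO1: "is_pushout C k r rt kR"
    using get_po[OF hq kh rl(2)] by blast
  have Kl: "Dom C l = K" "Cod C l = L" "Cod C tL = L'" using rl by (auto simp: hom_def)
  have cd: "cand C l r tL tK l' e t t' \<beta> p1 p2 lt tKt k rt kR"
  proof -
    have pk: "Cmp C p2 (Cmp C tKt k) = tK" using k(3) kK(3) by simp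
    have eh': "hom C e (Cod C l) (Cod C e)" using eh Kl by (simp add: Le_def)
    have th': "hom C t (Cod C e) (Cod C tL)" using th Kl by (simp add: Le_def)
    have kh': "hom C k (Dom C l) (Dom C lt)" using k(1) Kl by simp
    show ?thesis unfolding cand_def
      using eh' th' te sa1(1,2,3,4) sa2 PB1 PB2 kh' k(2) pk PO1 by blast
  qed
  have "mono C m' \<and> Dom C m' = Dom C t \<and> hom C \<alpha> (Cod C m') (Cod C t) \<and> t = Cmp C \<alpha> m'"
    using em1(2) m'h dt st(2) cm' by (simp add: hom_def t_def)
  then obtain a' where a': "hom C a' (Cod C m') (Cod C t')" "Cmp C a' m' = t'" "Cmp C \<beta> a' = \<alpha>"
      "is_pullback C t' a' (Idt C (Dom C t)) m'"
    using sa2 by blast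
  have a'h: "hom C a' GL L2" using a'(1) cm' by (simp add: L2_def)
  have clt: "Cod C lt = Le" using lth by (simp add: hom_def)
  have agL: "hom C (Cmp C a' gL) GK (Dom C \<beta>)" using hom_comp[OF C gLh a'h] \<beta>h by (simp add: hom_def)
  have u'h2: "hom C u' GK (Dom C l')" using u'h rl(6) by (simp add: hom_def)
  have "Cmp C \<beta> (Cmp C a' gL) = Cmp C l' u'"
    using assoc[OF C gLh a'h \<beta>h] a'(3) S4(6) by simp
  then obtain u2 where u2: "hom C u2 GK (Dom C p1)" "Cmp C p1 u2 = Cmp C a' gL" "Cmp C p2 u2 = u'"
    using pb_ex[OF PB1 agL u'h2] by metis
  have a'h2: "hom C a' GL (Dom C \<beta>)" using a'h \<beta>h by (simp add: hom_def)
  have PBo: "is_pullback C (Cmp C \<beta> a') l' gL u'" using st(4) a'(3) by simp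
  have PB3: "is_pullback C a' p1 gL u2"
    using pb_cancel[OF C PB1 PBo a'h2] u2 by (simp add: GK_def)
  have A: "is_pullback C t' a' (Idt C (Dom C t')) m'" using a'(4) sa1(2) by simp
  have mlt: "hom C (Cmp C m' lt) Kt (Dom C a')" using hom_comp[OF C lth m'h] a'h by (simp add: hom_def)
  have tKt2: "hom C tKt Kt (Dom C p1)" using tKth by (simp add: K2_def)
  have "Cmp C a' (Cmp C m' lt) = Cmp C p1 tKt"
    using assoc[OF C lth m'h a'h] a'(2) P2(6) by simp
  then obtain ut where ut: "hom C ut Kt (Dom C gL)" "Cmp C gL ut = Cmp C m' lt" "Cmp C u2 ut = tKt"
    using pb_ex[OF PB3 mlt tKt2] by metis
  have uth: "hom C ut Kt GK" using ut(1) by (simp add: GK_def)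
  have uniq: "\<forall>v. hom C v (Dom C lt) (Dom C gL) \<and> Cmp C u2 v = tKt \<longrightarrow> v = ut"
  proof (intro allI impI)
    fix v assume v: "hom C v (Dom C lt) (Dom C gL) \<and> Cmp C u2 v = tKt"
    have "Cmp C gL v = Cmp C m' lt" using gl_u[OF C A PB3 PB2] v by blast
    then show "v = ut" using pb_uniq[OF C PB3, of v Kt ut] v ut by (simp add: Kt_def GK_def)
  qed
  have utk: "hom C (Cmp C ut k) K GK" using hom_comp[OF C kh uth] .
  have "Cmp C ut k = u"
  proof (rule pb_uniq[OF C st(4), of _ K])
    show "hom C (Cmp C ut k) K (Dom C gL)" using utk by (simp add: GK_def)
    show "hom C u K (Dom C gL)" using st(5) .
    show "Cmp C gL (Cmp C ut k) = Cmp C gL u"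
      using assoc[OF C kh uth gLh] ut(2) assoc[OF C kh lth m'h] k(2) assoc[OF C rl(1) eh m'h]
        em1(4) st(6) by simp
    show "Cmp C u' (Cmp C ut k) = Cmp C u' u"
      using assoc[OF C kh uth u2(1)[unfolded K2_def[symmetric]]] u2(3)
        assoc[OF C utk u2(1)[unfolded K2_def[symmetric]] p2h] ut(3) k(3) kK(3) st(7)
      by (simp add: K2_def)
  qed
  then have POo: "is_pushout C (Cmp C ut k) r gR w" using st(8) by simp
  note PO = poD[OF st(8)]
  have gRh: "hom C gR GK (Cod C gR)" using PO(4) uh by (simp add: hom_def)
  have s1: "hom C (Cmp C gR ut) (Cod C k) (Cod C gR)" using hom_comp[OF C uth gRh] kh
    by (simp add: hom_def)
  have s2: "hom C w (Cod C r) (Cod C gR)" using PO(5) .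
  have "Cmp C (Cmp C gR ut) k = Cmp C w r" using assoc[OF C kh uth gRh] \<open>Cmp C ut k = u\<close> PO(6)
    by simp
  then obtain wt where wt: "hom C wt (Cod C rt) (Cod C gR)" "Cmp C wt rt = Cmp C gR ut"
      "Cmp C wt kR = w"
    using po_ex[OF PO1 s1 s2] by metis
  have uth2: "hom C ut (Cod C k) GK" using uth kh by (simp add: hom_def)
  have PO2: "is_pushout C ut rt gR wt" using po_cancel[OF C PO1 POo uth2 wt] .
  have f1: "hom C a' GL (Cod C t')" using a'(1) cm' by simp
  have f2: "hom C m' (Cod C lt) GL" using m'h clt by simp
  have f3: "is_pullback C t' a' (Idt C (Cod C lt)) m'" using a'(4) dt(1) clt by simp
  have f5: "hom C ut (Dom C lt) (Dom C gL)" using ut(1) by (simp add: Kt_def)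
  show ?thesis
    apply (rule exI[of _ e], rule exI[of _ t], rule exI[of _ t'], rule exI[of _ \<beta>], rule exI[of _ p1],
      rule exI[of _ p2], rule exI[of _ lt], rule exI[of _ tKt], rule exI[of _ k], rule exI[of _ rt],
      rule exI[of _ kR])
    apply (rule conjI[OF cd])
    apply (rule exI[of _ a'], rule exI[of _ m'], rule exI[of _ gL], rule exI[of _ u2], rule exI[of _ ut],
      rule exI[of _ gR], rule exI[of _ wt])
    using f1 f2 f3 PB3 f5 ut(3) uniq PO2 st(9) by blast
qed



lemma cand_rule:
  assumes C: "is_category C" and cd: "cand C l r tL tK l' e t t' \<beta> p1 p2 lt tKt k rt kR"
  shows "is_pbpop_rule C \<lparr>ql = lt, qr = rt, qtL = t', qtK = tKt, ql' = p1\<rparr>"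
proof -
  from cd have t'm: "mono C t'" and PB1: "is_pullback C \<beta> l' p1 p2"
    and PB2: "is_pullback C t' p1 lt tKt" and kh: "hom C k (Dom C l) (Dom C lt)"
    and PO1: "is_pushout C k r rt kR"
    unfolding cand_def by blast+
  note P2 = pbD[OF PB2] and O = poD[OF PO1]
  have "hom C lt (Dom C lt) (Cod C lt)" using P2(4) by (simp add: hom_def)
  moreover have "hom C rt (Dom C lt) (Cod C rt)" using O(4) kh by (simp add: hom_def)
  moreover have "hom C t' (Cod C lt) (Cod C t')" using P2(4) P2(1) by (simp add: hom_def)
  moreover have "hom C tKt (Dom C lt) (Cod C tKt)" using P2(5) by (simp add: hom_def)
  moreover have "hom C p1 (Cod C tKt) (Cod C t')" using P2(5) P2(2) P2(3) by (simp add: hom_def)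
  moreover have "mono C tKt" using pb_mono[OF C PB2 t'm] .
  ultimately show ?thesis unfolding is_pbpop_rule_def Let_def using t'm PB2 by simp
qed

theorem theorem1:
  fixes C :: "('o, 'a) cat" and \<rho> :: "'a pbpo_rule"
  assumes "is_category C"
    and "has_pullbacks C"
    and "has_pushouts C"
    and "strongly_amendable C"
    and "epi_mono_factorizations C"
    and "is_pbpo_rule C \<rho>"
  shows "\<exists>T :: 'a pbpop_rule set. (\<forall>\<tau>\<in>T. is_pbpop_rule C \<tau>) \<and>
           (\<forall>GL GR. pbpo_step C \<rho> GL GR \<longleftrightarrow> (\<exists>\<tau>\<in>T. pbpop_step C \<tau> GL GR))"
proof -
  note C = assms(1)
  define l where "l = pl \<rho>"
  define r where "r = pr \<rho>"
  define tL where "tL = ptL \<rho>"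
  define tK where "tK = ptK \<rho>"
  define tR where "tR = ptR \<rho>"
  define l' where "l' = pl' \<rho>"
  define r' where "r' = pr' \<rho>"
  have rl: "hom C l (Dom C l) (Cod C l)" "hom C r (Dom C l) (Cod C r)"
    "hom C tL (Cod C l) (Cod C tL)" "hom C tK (Dom C l) (Cod C tK)"
    "hom C tR (Cod C r) (Cod C tR)"
    "hom C l' (Cod C tK) (Cod C tL)" "hom C r' (Cod C tK) (Cod C tR)"
    "Cmp C tL l = Cmp C l' tK" "Cmp C tR r = Cmp C r' tK"
    using assms(6) unfolding is_pbpo_rule_def Let_def l_def r_def tL_def tK_def tR_def l'_def r'_def
    by blast+
  have step_eq: "pbpo_step C \<rho> GL GR \<longleftrightarrow>
     (\<exists>m \<alpha> gL u' u gR w w'. hom C m (Cod C l) GL \<and> hom C \<alpha> GL (Cod C tL) \<and> tL = Cmp C \<alpha> m \<and>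
     is_pullback C \<alpha> l' gL u' \<and> hom C u (Dom C l) (Dom C gL) \<and> Cmp C gL u = Cmp C m l \<and>
     Cmp C u' u = tK \<and> is_pushout C u r gR w \<and> Cod C gR = GR \<and>
     hom C w' GR (Cod C tR) \<and> Cmp C w' gR = Cmp C r' u' \<and> Cmp C w' w = tR)" for GL GR
    unfolding pbpo_step_def Let_def l_def r_def tL_def tK_def tR_def l'_def r'_def by simp
  define T where "T = {\<tau>. \<exists>e t t' \<beta> p1 p2 lt tKt k rt kR. cand C l r tL tK l' e t t' \<beta> p1 p2 lt tKt k rt kR
     \<and> \<tau> = \<lparr>ql = lt, qr = rt, qtL = t', qtK = tKt, ql' = p1\<rparr>}"
  have pstep: "pbpop_step C \<lparr>ql = lt, qr = rt, qtL = t', qtK = tKt, ql' = p1\<rparr> GL GR \<longleftrightarrow>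
     (\<exists>at mt gL ut' ut gR wt. hom C at GL (Cod C t') \<and> hom C mt (Cod C lt) GL \<and>
        is_pullback C t' at (Idt C (Cod C lt)) mt \<and> is_pullback C at p1 gL ut' \<and>
        hom C ut (Dom C lt) (Dom C gL) \<and> Cmp C ut' ut = tKt \<and>
        (\<forall>v. hom C v (Dom C lt) (Dom C gL) \<and> Cmp C ut' v = tKt \<longrightarrow> v = ut) \<and>
        is_pushout C ut rt gR wt \<and> Cod C gR = GR)" for lt rt t' tKt p1 GL GR
    unfolding pbpop_step_def Let_def by simp
  show ?thesis
  proof (intro exI[of _ T] conjI ballI allI iffI)
    fix \<tau> assume "\<tau> \<in> T"
    then show "is_pbpop_rule C \<tau>" unfolding T_def using cand_rule[OF C] by blast
  next
    fix GL GR assume "pbpo_step C \<rho> GL GR"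
    then obtain m \<alpha> gL u' u gR w w' where st: "hom C m (Cod C l) GL" "hom C \<alpha> GL (Cod C tL)"
      "tL = Cmp C \<alpha> m" "is_pullback C \<alpha> l' gL u'" "hom C u (Dom C l) (Dom C gL)"
      "Cmp C gL u = Cmp C m l" "Cmp C u' u = tK" "is_pushout C u r gR w" "Cod C gR = GR"
      unfolding step_eq by blast
    obtain e t t' \<beta> p1 p2 lt tKt k rt kR where cd: "cand C l r tL tK l' e t t' \<beta> p1 p2 lt tKt k rt kR"
      and ex: "\<exists>at mt gL ut' ut gR wt. hom C at GL (Cod C t') \<and> hom C mt (Cod C lt) GL \<and>
        is_pullback C t' at (Idt C (Cod C lt)) mt \<and> is_pullback C at p1 gL ut' \<and>
        hom C ut (Dom C lt) (Dom C gL) \<and> Cmp C ut' ut = tKt \<and>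
        (\<forall>v. hom C v (Dom C lt) (Dom C gL) \<and> Cmp C ut' v = tKt \<longrightarrow> v = ut) \<and>
        is_pushout C ut rt gR wt \<and> Cod C gR = GR"
      using rho_tau[OF C assms(2-5) rl st] by blast
    have "\<lparr>ql = lt, qr = rt, qtL = t', qtK = tKt, ql' = p1\<rparr> \<in> T" unfolding T_def using cd by blast
    moreover have "pbpop_step C \<lparr>ql = lt, qr = rt, qtL = t', qtK = tKt, ql' = p1\<rparr> GL GR"
      unfolding pstep using ex .
    ultimately show "\<exists>\<tau>\<in>T. pbpop_step C \<tau> GL GR" by blast
  next
    fix GL GR assume "\<exists>\<tau>\<in>T. pbpop_step C \<tau> GL GR"
    then obtain e t t' \<beta> p1 p2 lt tKt k rt kR where cd: "cand C l r tL tK l' e t t' \<beta> p1 p2 lt tKt k rt kR"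
      and ps: "pbpop_step C \<lparr>ql = lt, qr = rt, qtL = t', qtK = tKt, ql' = p1\<rparr> GL GR"
      unfolding T_def by blast
    then obtain at mt gL ut' ut gR wt where st: "hom C at GL (Cod C t')" "hom C mt (Cod C lt) GL"
        "is_pullback C t' at (Idt C (Cod C lt)) mt" "is_pullback C at p1 gL ut'"
        "hom C ut (Dom C lt) (Dom C gL)" "Cmp C ut' ut = tKt" "is_pushout C ut rt gR wt"
        "Cod C gR = GR"
      unfolding pstep by blast
    show "pbpo_step C \<rho> GL GR" unfolding step_eq using tau_rho[OF C rl cd st] .
  qed
qed

end
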